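(* Let $a,b,c\in\mathbb{R}^n$. Then the set $\{X\in\mathbb{S}^n_+:\ a^\top Xb\ge 0,\ b^\top Xc\ge 0,\ a^\top Xc\ge 0\}$ is rank-one generated.
   Context: $\mathbb{S}^n_+$ is the cone of real symmetric positive semidefinite $n\times n$ matrices. A closed convex cone $\mathcal{S}\subseteq\mathbb{S}^n_+$ is rank-one generated (ROG) if $\mathcal{S}=\mathrm{conv}(\mathcal{S}\cap\{xx^\top:x\in\mathbb{R}^n\})$. *)

theory Defs
  imports "HOL-Analysis.Analysis"
begin

definition psd_cone :: "(real^'n^'n) set" where
  "psd_cone = {X. transpose X = X \<and> (\<forall>x. 0 \<le> x \<bullet> (X *v x))}"

definition outer :: "real^'n \<Rightarrow> real^'n^'n" where
  "outer x = (\<chi> i j. x $ i * x $ j)"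

definition rank_one_generated :: "(real^'n^'n) set \<Rightarrow> bool" where
  "rank_one_generated S \<longleftrightarrow>
     S \<subseteq> psd_cone \<and> closed S \<and> convex_cone S \<and>
     S = convex hull (S \<inter> range outer)"

end

theory Submission
  imports Defs
begin

lemma qf: "(x::real^'n) \<bullet> (M *v y) = (\<Sum>i\<in>UNIV. \<Sum>j\<in>UNIV. x$i * M$i$j * y$j)"
  by (simp add: inner_vec_def matrix_vector_mult_def sum_distrib_left mult.assoc)

lemma outer_qf: "(x::real^'n) \<bullet> (outer u *v y) = (x \<bullet> u) * (u \<bullet> y)"
  unfolding qf unfolding outer_def inner_vec_def
  by (simp add: sum_product mult_ac)

lemma qf_add: "(x::real^'n) \<bullet> ((M + N) *v y) = x \<bullet> (M *v y) + x \<bullet> (N *v y)"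
  by (simp add: matrix_vector_mult_add_rdistrib inner_add_right)

lemma qf_diff: "(x::real^'n) \<bullet> ((M - N) *v y) = x \<bullet> (M *v y) - x \<bullet> (N *v y)"
  by (simp add: matrix_vector_mult_diff_rdistrib inner_diff_right)

lemma qf_sum: "(x::real^'n) \<bullet> ((\<Sum>k\<in>K. M k) *v y) = (\<Sum>k\<in>K. x \<bullet> (M k *v y))"
proof (induct K rule: infinite_finite_induct)
  case (insert k F)
  then show ?case by (simp add: qf_add)
qed simp_all

lemma qf_entry: "M$i$j = axis i 1 \<bullet> (M *v axis j (1::real))"
  proof -
  have "(if ia = i then 1 else 0) * M $ ia $ ja * (if ja = j then 1 else (0::real)) =
        (if ia = i then (if ja = j then M $ ia $ ja else 0) else 0)" for ia ja by simp
  moreover have "(\<Sum>ja\<in>UNIV. (if ia = i then if ja = j then M $ ia $ ja else 0 else 0)) =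
     (if ia = i then M $ ia $ j else (0::real))" for ia by simp
  ultimately show ?thesis unfolding qf by (simp add: axis_def)
qed

lemma qf_sym: assumes "transpose M = M"
  shows "(x::real^'n) \<bullet> (M *v y) = y \<bullet> (M *v x)"
proof -
  have e: "M$i$j = M$j$i" for i j
    using arg_cong[OF assms, of "\<lambda>A. A$j$i"] by (simp add: transpose_def)
  show ?thesis unfolding qf
    by (subst sum.swap) (simp add: e mult_ac)
qed

lemma qf_expand:
  assumes "transpose M = M"
  shows "((x::real^'n) + t *\<^sub>R y) \<bullet> (M *v (x + t *\<^sub>R y)) =
     x \<bullet> (M *v x) + 2 * t * (x \<bullet> (M *v y)) + t^2 * (y \<bullet> (M *v y))"
  using qf_sym[OF assms, of y x]
  by (simp add: matrix_vector_right_distrib matrix_vector_mult_scaleR inner_add_left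
      inner_add_right power2_eq_square algebra_simps)

lemma psd_cs:
  assumes "transpose M = M" "\<forall>x. 0 \<le> x \<bullet> (M *v x)"
  shows "(x \<bullet> (M *v y))^2 \<le> (x \<bullet> (M *v x)) * ((y::real^'n) \<bullet> (M *v y))"
proof -
  define p where "p = x \<bullet> (M *v x)"
  define q where "q = y \<bullet> (M *v y)"
  define r where "r = x \<bullet> (M *v y)"
  have T: "0 \<le> p + 2 * t * r + t^2 * q" for t
    using assms(2)[rule_format, of "x + t *\<^sub>R y"] qf_expand[OF assms(1)]
    unfolding p_def q_def r_def by simp
  have p0: "0 \<le> p" "0 \<le> q" using assms(2) p_def q_def by auto
  show ?thesis
  proof (cases "q = 0")
    case True
    have "r = 0"
    proof (rule ccontr)
      assume "r \<noteq> 0"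
      have "0 \<le> p + 2 * (-(p+1)/(2*r)) * r" using T[of "-(p+1)/(2*r)"] True by simp
      also have "\<dots> = -1" using \<open>r \<noteq> 0\<close> by (simp add: field_simps)
      finally show False by simp
    qed
    then show ?thesis using p0 True unfolding p_def q_def r_def by simp
  next
    case False
    then have qp: "q > 0" using p0 by simp
    have "0 \<le> p + 2 * (-r/q) * r + (-r/q)^2 * q" using T .
    also have "\<dots> = p - r^2/q" using qp by (simp add: field_simps power2_eq_square)
    finally have "r^2/q \<le> p" by simp
    then have "r^2 \<le> p * q" using qp by (simp add: divide_le_eq)
    then show ?thesis unfolding p_def q_def r_def by simp
  qed
qed

lemma psd_entry:
  assumes "X \<in> psd_cone"
  shows "(X$i$j)^2 \<le> X$i$i * X$j$j" "0 \<le> X$i$i"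
proof -
  have a: "transpose X = X" "\<forall>x. 0 \<le> x \<bullet> (X *v x)" using assms by (auto simp: psd_cone_def)
  show "(X$i$j)^2 \<le> X$i$i * X$j$j"
    using psd_cs[OF a, of "axis i 1" "axis j 1"] by (simp add: qf_entry[symmetric])
  show "0 \<le> X$i$i" using a(2) qf_entry[of X i i] by metis
qed

lemma psd_zero_diag:
  assumes "X \<in> psd_cone" "X$i$i = 0"
  shows "X$i$j = 0" "X$j$i = 0"
proof -
  have "(X$i$j)^2 \<le> 0" using psd_entry(1)[OF assms(1), of i j] assms(2) by simp
  then show "X$i$j = 0" by simp
  have "(X$j$i)^2 \<le> 0" using psd_entry(1)[OF assms(1), of j i] assms(2) by simp
  then show "X$j$i = 0" by simp
qed

lemma outer_0[simp]: "outer 0 = 0"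
  by (simp add: outer_def vec_eq_iff)

lemma delta_sum: "(\<Sum>j\<in>(UNIV::'n::finite set). (f j::real) * (if j = d then 1 else 0)) = f d"
proof -
  have "f j * (if j = d then 1 else 0) = (if j = d then f j else 0)" for j by simp
  then show ?thesis by simp
qed

lemma qf_col: "(x::real^'n) \<bullet> (X *v axis d 1) = (\<Sum>i\<in>UNIV. x$i * X$i$d)"
  by (simp add: inner_vec_def matrix_vector_mult_def axis_def delta_sum)

lemma chol_aux:
  fixes D :: "'n::finite set"
  assumes "finite D"
  shows "\<forall>X::real^'n^'n. X \<in> psd_cone \<longrightarrow> (\<forall>i. i \<notin> D \<longrightarrow> X$i$i = 0) \<longrightarrow>
           (\<exists>v. X = (\<Sum>i\<in>D. outer (v i)))"
  using assms
proof (induct D rule: finite_induct)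
  case empty
  show ?case
  proof (intro allI impI)
    fix X :: "real^'n^'n"
    assume X: "X \<in> psd_cone" "\<forall>i. i \<notin> {} \<longrightarrow> X$i$i = 0"
    have "X$i$j = 0" for i j using psd_zero_diag(1)[OF X(1), of i j] X(2) by simp
    then have "X = 0" by (simp add: vec_eq_iff)
    then show "\<exists>v. X = (\<Sum>i\<in>{}. outer (v i))" by simp
  qed
next
  case (insert d D)
  show ?case
  proof (intro allI impI)
    fix X :: "real^'n^'n"
    assume X: "X \<in> psd_cone" "\<forall>i. i \<notin> insert d D \<longrightarrow> X$i$i = 0"
    have sym: "transpose X = X" and pos: "\<forall>x. 0 \<le> x \<bullet> (X *v x)" using X(1) by (auto simp: psd_cone_def)
    have esym: "X$i$j = X$j$i" for i j
      using arg_cong[OF sym, of "\<lambda>A. A$j$i"] by (simp add: transpose_def)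
    show "\<exists>v. X = (\<Sum>i\<in>insert d D. outer (v i))"
    proof (cases "X$d$d = 0")
      case True
      then have "\<forall>i. i \<notin> D \<longrightarrow> X$i$i = 0" using X(2) by auto
      then obtain v where v: "X = (\<Sum>i\<in>D. outer (v i))" using insert(3) X(1) by blast
      have "(\<Sum>i\<in>insert d D. outer ((v(d := 0)) i)) = (\<Sum>i\<in>D. outer (v i))"
        using insert(1,2) by (simp add: sum.insert, intro sum.cong) auto
      then show ?thesis using v by metis
    next
      case False
      define s where "s = X$d$d"
      have s: "0 < s" using False psd_entry(2)[OF X(1), of d] s_def by simp
      define u where "u = (\<chi> i. X$i$d / sqrt s)"
      define X' where "X' = X - outer u"
      have ss: "sqrt s * sqrt s = s" using s by simp
      have uu: "u$i * u$j = X$i$d * X$j$d / s" for i j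
      proof -
        have "u$i * u$j = X$i$d * X$j$d / (sqrt s * sqrt s)" by (simp add: u_def)
        then show ?thesis by (simp only: ss)
      qed
      have X'e: "X'$i$j = X$i$j - X$i$d * X$j$d / s" for i j
        by (simp add: X'_def outer_def uu)
      have xu: "x \<bullet> u = (x \<bullet> (X *v axis d 1)) / sqrt s" for x
        unfolding qf_col by (simp add: inner_vec_def u_def sum_divide_distrib)
      have "X' \<in> psd_cone"
        unfolding psd_cone_def
      proof (intro CollectI conjI allI)
        have "X'$j$i = X'$i$j" for i j using esym[of j i] by (simp add: X'e mult.commute)
        then show "transpose X' = X'"
          by (simp add: vec_eq_iff transpose_def)
        fix x
        have cs: "(x \<bullet> (X *v axis d 1))^2 \<le> (x \<bullet> (X *v x)) * s"
          using psd_cs[OF sym pos, of x "axis d 1"] by (simp add: s_def qf_entry[symmetric])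
        have "x \<bullet> (X' *v x) = x \<bullet> (X *v x) - (x \<bullet> u)^2"
          by (simp add: X'_def qf_diff outer_qf power2_eq_square inner_commute)
        also have "\<dots> = x \<bullet> (X *v x) - (x \<bullet> (X *v axis d 1))^2 / s"
          using s by (simp add: xu power_divide)
        finally have eq: "x \<bullet> (X' *v x) = x \<bullet> (X *v x) - (x \<bullet> (X *v axis d 1))^2 / s" .
        have "(x \<bullet> (X *v axis d 1))^2 / s \<le> x \<bullet> (X *v x)"
          using cs s by (simp add: divide_le_eq mult.commute)
        then show "0 \<le> x \<bullet> (X' *v x)" using eq by linarith
      qed
      moreover have "\<forall>i. i \<notin> D \<longrightarrow> X'$i$i = 0"
      proof (intro allI impI)
        fix i assume "i \<notin> D"
        show "X'$i$i = 0"
        proof (cases "i = d")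
          case True then show ?thesis using s by (simp add: X'e s_def power2_eq_square)
        next
          case False
          then have "X$i$i = 0" using X(2) \<open>i \<notin> D\<close> by auto
          moreover have "X$i$d = 0" using psd_zero_diag(1)[OF X(1) \<open>X$i$i = 0\<close>, of d] .
          ultimately show ?thesis by (simp add: X'e)
        qed
      qed
      ultimately obtain v where v: "X' = (\<Sum>i\<in>D. outer (v i))" using insert(3) by blast
      have "(\<Sum>i\<in>insert d D. outer ((v(d := u)) i)) = outer u + (\<Sum>i\<in>D. outer (v i))"
        using insert(1,2) by (simp add: sum.insert, intro sum.cong) auto
      also have "\<dots> = X" using v[symmetric] by (simp add: X'_def)
      finally show ?thesis by metis
    qed
  qed
qed

lemma cholesky:
  assumes "(X::real^'n^'n) \<in> psd_cone"
  shows "\<exists>v. X = (\<Sum>i\<in>(UNIV::'n set). outer (v i))"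
  using chol_aux[of "UNIV::'n set"] assms by auto


definition proj :: "'a::real_inner \<Rightarrow> 'a \<Rightarrow> 'a" where
  "proj u w = ((w \<bullet> u) / (u \<bullet> u)) *\<^sub>R u"

lemma orth_proj: "u \<bullet> (w - proj u w) = 0"
  by (cases "u = 0") (auto simp: proj_def inner_diff_right inner_commute)

lemma orth_proj2: "v \<bullet> u = 0 \<Longrightarrow> v \<bullet> proj u w = 0"
  by (simp add: proj_def)

lemma sq_div_case: "(a * (f::real)) ^ 2 / f = a^2 * f"
  by (cases "f = 0") (simp_all add: power2_eq_square field_simps)

lemma parseval3:
  fixes f1 f2 f3 :: "'a::real_inner"
  assumes o: "f1 \<bullet> f2 = 0" "f1 \<bullet> f3 = 0" "f2 \<bullet> f3 = 0"
    and w: "w = a1 *\<^sub>R f1 + a2 *\<^sub>R f2 + a3 *\<^sub>R f3"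
  shows "w \<bullet> w = (w \<bullet> f1)^2/(f1 \<bullet> f1) + (w \<bullet> f2)^2/(f2 \<bullet> f2) + (w \<bullet> f3)^2/(f3 \<bullet> f3)"
proof -
  have o': "f2 \<bullet> f1 = 0" "f3 \<bullet> f1 = 0" "f3 \<bullet> f2 = 0" using o by (simp_all add: inner_commute)
  have i1: "w \<bullet> f1 = a1 * (f1 \<bullet> f1)" and i2: "w \<bullet> f2 = a2 * (f2 \<bullet> f2)"
    and i3: "w \<bullet> f3 = a3 * (f3 \<bullet> f3)"
    using o o' by (simp_all add: w inner_add_left)
  have "w \<bullet> w = w \<bullet> (a1 *\<^sub>R f1 + a2 *\<^sub>R f2 + a3 *\<^sub>R f3)"
    by (simp only: w[symmetric])
  also have "\<dots> = a1 * (w \<bullet> f1) + a2 * (w \<bullet> f2) + a3 * (w \<bullet> f3)"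
    by (simp add: inner_add_right)
  also have "\<dots> = a1^2 * (f1 \<bullet> f1) + a2^2 * (f2 \<bullet> f2) + a3^2 * (f3 \<bullet> f3)"
    by (simp add: i1 i2 i3 power2_eq_square)
  finally show ?thesis by (simp add: i1 i2 i3 sq_div_case)
qed

lemma bessel3:
  fixes f1 f2 f3 :: "'a::real_inner"
  assumes o: "f1 \<bullet> f2 = 0" "f1 \<bullet> f3 = 0" "f2 \<bullet> f3 = 0"
  shows "(w \<bullet> f1)^2/(f1 \<bullet> f1) + (w \<bullet> f2)^2/(f2 \<bullet> f2) + (w \<bullet> f3)^2/(f3 \<bullet> f3) \<le> w \<bullet> w"
proof -
  define p where "p = proj f1 w + proj f2 w + proj f3 w"
  define r where "r = w - p"
  have pp: "p = (w \<bullet> f1 / (f1 \<bullet> f1)) *\<^sub>R f1 + (w \<bullet> f2 / (f2 \<bullet> f2)) *\<^sub>R f2 + (w \<bullet> f3 / (f3 \<bullet> f3)) *\<^sub>R f3"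
    by (simp add: p_def proj_def)
  have o': "f2 \<bullet> f1 = 0" "f3 \<bullet> f1 = 0" "f3 \<bullet> f2 = 0" using o by (simp_all add: inner_commute)
  have rf: "r \<bullet> f1 = 0" "r \<bullet> f2 = 0" "r \<bullet> f3 = 0"
    using o o' by (auto simp: r_def pp inner_diff_left inner_add_left)
  have rp: "r \<bullet> p = 0" using rf by (simp add: pp inner_add_right)
  have "w \<bullet> w = (r + p) \<bullet> (r + p)" by (simp add: r_def)
  also have "\<dots> = r \<bullet> r + p \<bullet> p" using rp by (simp add: inner_add_left inner_add_right inner_commute)
  finally have "p \<bullet> p \<le> w \<bullet> w" by simp
  moreover have "p \<bullet> p = (p \<bullet> f1)^2/(f1 \<bullet> f1) + (p \<bullet> f2)^2/(f2 \<bullet> f2) + (p \<bullet> f3)^2/(f3 \<bullet> f3)"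
    by (rule parseval3[OF o pp])
  moreover have "p \<bullet> f1 = w \<bullet> f1" "p \<bullet> f2 = w \<bullet> f2" "p \<bullet> f3 = w \<bullet> f3"
    using rf by (simp_all add: r_def inner_diff_left)
  ultimately show ?thesis by simp
qed

lemma normalize_facts:
  fixes f :: "'a::real_inner"
  shows "w \<bullet> ((1 / norm f) *\<^sub>R f) = (w \<bullet> f) / norm f"
    and "(w \<bullet> ((1 / norm f) *\<^sub>R f))^2 = (w \<bullet> f)^2 / (f \<bullet> f)"
  by (simp_all add: power_divide power2_norm_eq_inner)

lemma gs3_ord:
  fixes x y z :: "'a::real_inner"
  assumes xy: "0 \<le> x \<bullet> y" and xz: "0 \<le> x \<bullet> z" and yz: "0 \<le> y \<bullet> z"
    and ord: "(x \<bullet> y) * (x \<bullet> z) \<le> (y \<bullet> z) * (x \<bullet> x)"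
  shows "\<exists>e1 e2 e3. (\<forall>e\<in>{e1,e2,e3}. 0 \<le> x \<bullet> e \<and> 0 \<le> y \<bullet> e \<and> 0 \<le> z \<bullet> e) \<and>
     (\<forall>w. (w \<bullet> e1)^2 + (w \<bullet> e2)^2 + (w \<bullet> e3)^2 \<le> w \<bullet> w) \<and>
     x \<bullet> x = (x \<bullet> e1)^2 + (x \<bullet> e2)^2 + (x \<bullet> e3)^2 \<and>
     y \<bullet> y = (y \<bullet> e1)^2 + (y \<bullet> e2)^2 + (y \<bullet> e3)^2 \<and>
     z \<bullet> z = (z \<bullet> e1)^2 + (z \<bullet> e2)^2 + (z \<bullet> e3)^2"
proof -
  define f1 where "f1 = x"
  define f2 where "f2 = y - proj f1 y"
  define z' where "z' = z - proj f1 z"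
  define f3 where "f3 = z' - proj f2 z'"
  have o12: "f1 \<bullet> f2 = 0" unfolding f2_def by (rule orth_proj)
  have o23: "f2 \<bullet> f3 = 0" unfolding f3_def by (rule orth_proj)
  have o1z: "f1 \<bullet> z' = 0" unfolding z'_def by (rule orth_proj)
  have o13: "f1 \<bullet> f3 = 0" unfolding f3_def
    using o1z orth_proj2[OF o12] by (simp add: inner_diff_right)
  have o: "f1 \<bullet> f2 = 0" "f1 \<bullet> f3 = 0" "f2 \<bullet> f3 = 0" using o12 o13 o23 by auto
  have o': "f2 \<bullet> f1 = 0" "f3 \<bullet> f1 = 0" "f3 \<bullet> f2 = 0" using o by (simp_all add: inner_commute)
  have rx: "x = 1 *\<^sub>R f1 + 0 *\<^sub>R f2 + 0 *\<^sub>R f3" by (simp add: f1_def)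
  have ry: "y = (y \<bullet> f1 / (f1 \<bullet> f1)) *\<^sub>R f1 + 1 *\<^sub>R f2 + 0 *\<^sub>R f3"
    by (simp add: f2_def proj_def)
  have rz: "z = (z \<bullet> f1 / (f1 \<bullet> f1)) *\<^sub>R f1 + (z' \<bullet> f2 / (f2 \<bullet> f2)) *\<^sub>R f2 + 1 *\<^sub>R f3"
    by (simp add: f3_def z'_def proj_def)
  have sx: "0 \<le> x \<bullet> f1" "0 \<le> x \<bullet> f2" "0 \<le> x \<bullet> f3"
    using o by (simp_all add: f1_def)
  have sy1: "0 \<le> y \<bullet> f1" using xy by (simp add: f1_def inner_commute)
  have sy2: "y \<bullet> f2 = f2 \<bullet> f2"
    using o o' by (subst ry) (simp add: inner_add_left)
  have sy3: "y \<bullet> f3 = 0"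
    using o o' by (subst ry) (simp add: inner_add_left)
  have sz1: "0 \<le> z \<bullet> f1" using xz by (simp add: f1_def inner_commute)
  have sz3: "z \<bullet> f3 = f3 \<bullet> f3"
    using o o' by (subst rz) (simp add: inner_add_left)
  have sz2: "0 \<le> z \<bullet> f2"
  proof (cases "x = 0")
    case True
    then show ?thesis using yz by (simp add: f2_def f1_def proj_def inner_commute)
  next
    case False
    then have xx: "0 < x \<bullet> x" by simp
    have "z \<bullet> f2 = z \<bullet> y - (y \<bullet> x) / (x \<bullet> x) * (z \<bullet> x)"
      by (simp add: f2_def f1_def proj_def inner_diff_right)
    also have "\<dots> = ((y \<bullet> z) * (x \<bullet> x) - (x \<bullet> y) * (x \<bullet> z)) / (x \<bullet> x)"
      using xx by (simp add: field_simps inner_commute)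
    finally show ?thesis using ord xx by simp
  qed
  define e1 where "e1 = (1 / norm f1) *\<^sub>R f1"
  define e2 where "e2 = (1 / norm f2) *\<^sub>R f2"
  define e3 where "e3 = (1 / norm f3) *\<^sub>R f3"
  have sgn: "0 \<le> w \<bullet> ((1 / norm f) *\<^sub>R f)" if "0 \<le> w \<bullet> f" for w f :: 'a
    using that by (simp add: normalize_facts(1))
  have "\<forall>e\<in>{e1,e2,e3}. 0 \<le> x \<bullet> e \<and> 0 \<le> y \<bullet> e \<and> 0 \<le> z \<bullet> e"
    unfolding e1_def e2_def e3_def
    using sx sy1 sy2 sy3 sz1 sz2 sz3 by (auto intro!: sgn)
  moreover have "\<forall>w. (w \<bullet> e1)^2 + (w \<bullet> e2)^2 + (w \<bullet> e3)^2 \<le> w \<bullet> w"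
    using bessel3[OF o] unfolding e1_def e2_def e3_def normalize_facts(2) by blast
  moreover have "x \<bullet> x = (x \<bullet> e1)^2 + (x \<bullet> e2)^2 + (x \<bullet> e3)^2"
    using parseval3[OF o rx] unfolding e1_def e2_def e3_def normalize_facts(2) .
  moreover have "y \<bullet> y = (y \<bullet> e1)^2 + (y \<bullet> e2)^2 + (y \<bullet> e3)^2"
    using parseval3[OF o ry] unfolding e1_def e2_def e3_def normalize_facts(2) .
  moreover have "z \<bullet> z = (z \<bullet> e1)^2 + (z \<bullet> e2)^2 + (z \<bullet> e3)^2"
    using parseval3[OF o rz] unfolding e1_def e2_def e3_def normalize_facts(2) .
  ultimately show ?thesis by blast
qed

lemma ord_real:
  fixes A B C p q r :: real
  assumes "0 \<le> A" "0 \<le> B" "0 \<le> C" "0 \<le> p" "0 \<le> q" "0 \<le> r"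
    and "A^2 \<le> p * q" "B^2 \<le> p * r" "C^2 \<le> q * r"
  shows "A * B \<le> C * p \<or> A * C \<le> B * q \<or> B * C \<le> A * r"
proof (rule ccontr)
  assume "\<not> ?thesis"
  then have h: "C * p < A * B" "B * q < A * C" "A * r < B * C" by auto
  have n: "0 \<le> C * p" "0 \<le> B * q" "0 \<le> A * r" using assms by auto
  have ab0: "0 < A * B" using h(1) n(1) by linarith
  have m1: "(C * p) * (B * q) < (A * B) * (A * C)"
    by (rule mult_strict_mono[OF h(1) h(2) ab0 n(2)])
  have m0: "0 \<le> (C * p) * (B * q)" using n by simp
  have m2: "0 < (A * B) * (A * C)" using m1 m0 by linarith
  have "(C * p) * (B * q) * (A * r) < (A * B) * (A * C) * (B * C)"
    by (rule mult_strict_mono[OF m1 h(3) m2 n(3)])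
  then have 1: "(A*B*C) * (p*q*r) < (A*B*C) * (A*B*C)" by (simp add: mult_ac)
  have "0 \<le> A*B*C" using assms by simp
  moreover have "A*B*C \<noteq> 0"
  proof
    assume "A*B*C = 0"
    with 1 show False by simp
  qed
  ultimately have abc: "0 < A*B*C" by (metis order_le_neq_trans)
  then have 2: "p*q*r < A*B*C" using mult_left_less_imp_less[OF 1] by simp
  have "(A*B*C)^2 = A^2 * B^2 * C^2" by (simp add: power_mult_distrib)
  also have "\<dots> \<le> (p*q) * (p*r) * (q*r)"
  proof -
    have pq: "0 \<le> p*q" "0 \<le> p*r" using assms(4,5,6) by simp_all
    have "A^2 * B^2 \<le> (p*q) * (p*r)"
      by (rule mult_mono[OF assms(7) assms(8) pq(1)]) simp
    moreover have "0 \<le> (p*q) * (p*r)" using pq by simp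
    ultimately show ?thesis by (rule mult_mono[OF _ assms(9)]) simp
  qed
  also have "\<dots> = (p*q*r)^2" by (simp add: power2_eq_square mult_ac)
  finally have sq: "(A*B*C)^2 \<le> (p*q*r)^2" .
  have pqr0: "0 \<le> p*q*r" using assms by simp
  have "A*B*C \<le> p*q*r" by (rule power2_le_imp_le[OF sq pqr0])
  then show False using 2 by simp
qed

lemma gs3:
  fixes x y z :: "'a::real_inner"
  assumes xy: "0 \<le> x \<bullet> y" and xz: "0 \<le> x \<bullet> z" and yz: "0 \<le> y \<bullet> z"
  shows "\<exists>e1 e2 e3. (\<forall>e\<in>{e1,e2,e3}. 0 \<le> x \<bullet> e \<and> 0 \<le> y \<bullet> e \<and> 0 \<le> z \<bullet> e) \<and>
     (\<forall>w. (w \<bullet> e1)^2 + (w \<bullet> e2)^2 + (w \<bullet> e3)^2 \<le> w \<bullet> w) \<and>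
     x \<bullet> x = (x \<bullet> e1)^2 + (x \<bullet> e2)^2 + (x \<bullet> e3)^2 \<and>
     y \<bullet> y = (y \<bullet> e1)^2 + (y \<bullet> e2)^2 + (y \<bullet> e3)^2 \<and>
     z \<bullet> z = (z \<bullet> e1)^2 + (z \<bullet> e2)^2 + (z \<bullet> e3)^2"
proof -
  have "(x \<bullet> y) * (x \<bullet> z) \<le> (y \<bullet> z) * (x \<bullet> x) \<or>
        (x \<bullet> y) * (y \<bullet> z) \<le> (x \<bullet> z) * (y \<bullet> y) \<or>
        (x \<bullet> z) * (y \<bullet> z) \<le> (x \<bullet> y) * (z \<bullet> z)"
    using ord_real[OF xy xz yz inner_ge_zero inner_ge_zero inner_ge_zero
      Cauchy_Schwarz_ineq Cauchy_Schwarz_ineq Cauchy_Schwarz_ineq] .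
  then show ?thesis
  proof (elim disjE)
    assume "(x \<bullet> y) * (x \<bullet> z) \<le> (y \<bullet> z) * (x \<bullet> x)"
    from gs3_ord[OF xy xz yz this] show ?thesis .
  next
    assume "(x \<bullet> y) * (y \<bullet> z) \<le> (x \<bullet> z) * (y \<bullet> y)"
    then have o2: "(y \<bullet> x) * (y \<bullet> z) \<le> (x \<bullet> z) * (y \<bullet> y)" by (simp add: inner_commute)
    have yx: "0 \<le> y \<bullet> x" using xy by (simp add: inner_commute)
    obtain e1 e2 e3 where A: "\<forall>e\<in>{e1,e2,e3}. 0 \<le> y \<bullet> e \<and> 0 \<le> x \<bullet> e \<and> 0 \<le> z \<bullet> e"
      and B: "\<forall>w. (w \<bullet> e1)^2 + (w \<bullet> e2)^2 + (w \<bullet> e3)^2 \<le> w \<bullet> w"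
      and C1: "y \<bullet> y = (y \<bullet> e1)^2 + (y \<bullet> e2)^2 + (y \<bullet> e3)^2"
      and C2: "x \<bullet> x = (x \<bullet> e1)^2 + (x \<bullet> e2)^2 + (x \<bullet> e3)^2"
      and C3: "z \<bullet> z = (z \<bullet> e1)^2 + (z \<bullet> e2)^2 + (z \<bullet> e3)^2"
      using gs3_ord[of y x z, OF yx yz xz o2] by blast
    have A': "\<forall>e\<in>{e1,e2,e3}. 0 \<le> x \<bullet> e \<and> 0 \<le> y \<bullet> e \<and> 0 \<le> z \<bullet> e" using A by blast
    show ?thesis using A' B C1 C2 C3 by blast
  next
    assume "(x \<bullet> z) * (y \<bullet> z) \<le> (x \<bullet> y) * (z \<bullet> z)"
    then have o3: "(z \<bullet> x) * (z \<bullet> y) \<le> (x \<bullet> y) * (z \<bullet> z)" by (simp add: inner_commute)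
    have zx: "0 \<le> z \<bullet> x" using xz by (simp add: inner_commute)
    have zy: "0 \<le> z \<bullet> y" using yz by (simp add: inner_commute)
    obtain e1 e2 e3 where A: "\<forall>e\<in>{e1,e2,e3}. 0 \<le> z \<bullet> e \<and> 0 \<le> x \<bullet> e \<and> 0 \<le> y \<bullet> e"
      and B: "\<forall>w. (w \<bullet> e1)^2 + (w \<bullet> e2)^2 + (w \<bullet> e3)^2 \<le> w \<bullet> w"
      and C1: "z \<bullet> z = (z \<bullet> e1)^2 + (z \<bullet> e2)^2 + (z \<bullet> e3)^2"
      and C2: "x \<bullet> x = (x \<bullet> e1)^2 + (x \<bullet> e2)^2 + (x \<bullet> e3)^2"
      and C3: "y \<bullet> y = (y \<bullet> e1)^2 + (y \<bullet> e2)^2 + (y \<bullet> e3)^2"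
      using gs3_ord[of z x y, OF zx zy xy o3] by blast
    have A': "\<forall>e\<in>{e1,e2,e3}. 0 \<le> x \<bullet> e \<and> 0 \<le> y \<bullet> e \<and> 0 \<le> z \<bullet> e" using A by blast
    show ?thesis using A' B C1 C2 C3 by blast
  qed
qed


lemma sqrt2_prod: "(sqrt 2 * a) * (sqrt 2 * b) = 2 * ((a::real) * b)"
proof -
  have "(sqrt 2 * a) * (sqrt 2 * b) = (sqrt 2 * sqrt 2) * (a * b)" by (simp only: mult_ac)
  then show ?thesis by simp
qed

lemma sym_iff: "transpose M = M \<longleftrightarrow> (\<forall>i j. (M::real^'n^'n)$i$j = M$j$i)"
  by (auto simp: vec_eq_iff transpose_def)

lemma outer_psd: "outer u \<in> psd_cone"
proof -
  have "transpose (outer u) = outer u" by (simp add: sym_iff outer_def mult.commute)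
  moreover have "0 \<le> x \<bullet> (outer u *v x)" for x by (simp add: outer_qf inner_commute)
  ultimately show ?thesis by (simp add: psd_cone_def)
qed

lemma Xq_sum: "p \<bullet> ((\<Sum>i\<in>UNIV. outer (v i)) *v q) =
   (\<chi> i. p \<bullet> (v i :: real^'n)) \<bullet> (\<chi> i. q \<bullet> v i)"
  unfolding qf_sum outer_qf inner_commute[of "v _" q] by (simp add: inner_vec_def)

lemma decomp:
  fixes a b c :: "real^'n"
  assumes X: "X \<in> psd_cone" "0 \<le> a \<bullet> (X *v b)" "0 \<le> b \<bullet> (X *v c)" "0 \<le> a \<bullet> (X *v c)"
  shows "\<exists>w1 w2 w3 (y::'n \<Rightarrow> real^'n).
     X = outer w1 + outer w2 + outer w3 + (\<Sum>i\<in>UNIV. outer (y i)) \<and>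
     (\<forall>w\<in>{w1,w2,w3}. 0 \<le> a \<bullet> w \<and> 0 \<le> b \<bullet> w \<and> 0 \<le> c \<bullet> w) \<and>
     (\<forall>i. a \<bullet> y i = 0 \<and> b \<bullet> y i = 0 \<and> c \<bullet> y i = 0)"
proof -
  obtain v :: "'n \<Rightarrow> real^'n" where v: "X = (\<Sum>i\<in>UNIV. outer (v i))"
    using cholesky[OF X(1)] by blast
  define coef where "coef p = (\<chi> i. p \<bullet> v i)" for p
  have Xq: "p \<bullet> (X *v q) = coef p \<bullet> coef q" for p q
    unfolding v coef_def by (rule Xq_sum)
  have ab: "0 \<le> coef a \<bullet> coef b" and bc: "0 \<le> coef b \<bullet> coef c" and ac: "0 \<le> coef a \<bullet> coef c"
    using X Xq by auto
  obtain e1 e2 e3 where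
    sgn: "\<forall>e\<in>{e1,e2,e3}. 0 \<le> coef a \<bullet> e \<and> 0 \<le> coef b \<bullet> e \<and> 0 \<le> coef c \<bullet> e" and
    bes: "\<forall>w. (w \<bullet> e1)^2 + (w \<bullet> e2)^2 + (w \<bullet> e3)^2 \<le> w \<bullet> w" and
    pa: "coef a \<bullet> coef a = (coef a \<bullet> e1)^2 + (coef a \<bullet> e2)^2 + (coef a \<bullet> e3)^2" and
    pb: "coef b \<bullet> coef b = (coef b \<bullet> e1)^2 + (coef b \<bullet> e2)^2 + (coef b \<bullet> e3)^2" and
    pc: "coef c \<bullet> coef c = (coef c \<bullet> e1)^2 + (coef c \<bullet> e2)^2 + (coef c \<bullet> e3)^2"
    using gs3[OF ab ac bc] by blast
  define W where "W e = (\<Sum>i\<in>UNIV. (e$i) *\<^sub>R v i)" for e :: "real^'n"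
  have pW: "p \<bullet> W e = coef p \<bullet> e" for p e
    unfolding W_def coef_def inner_sum_right inner_scaleR_right
    by (simp add: inner_vec_def[of "vec_lambda _" e] mult.commute)
  define Y where "Y = X - outer (W e1) - outer (W e2) - outer (W e3)"
  have symX: "\<forall>i j. X$i$j = X$j$i" using X(1) by (simp add: psd_cone_def sym_iff)
  have Yq: "p \<bullet> (Y *v q) = coef p \<bullet> coef q - (coef p \<bullet> e1) * (coef q \<bullet> e1)
      - (coef p \<bullet> e2) * (coef q \<bullet> e2) - (coef p \<bullet> e3) * (coef q \<bullet> e3)" for p q
    by (simp add: Y_def qf_diff outer_qf Xq pW inner_commute[of "W _" q])
  have "Y \<in> psd_cone"
    unfolding psd_cone_def
  proof (intro CollectI conjI allI)
    have "Y$i$j = Y$j$i" for i j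
      using symX[rule_format, of i j] by (simp add: Y_def outer_def mult.commute)
    then show "transpose Y = Y" by (simp add: sym_iff)
    fix x
    show "0 \<le> x \<bullet> (Y *v x)" using bes[rule_format, of "coef x"]
      by (simp add: Yq power2_eq_square)
  qed
  then obtain y :: "'n \<Rightarrow> real^'n" where y: "Y = (\<Sum>i\<in>UNIV. outer (y i))"
    using cholesky by blast
  have z: "p \<bullet> y i = 0" if "p \<bullet> (Y *v p) = 0" for p i
  proof -
    have "(\<Sum>i\<in>UNIV. (p \<bullet> y i)^2) = 0" using that
      unfolding y qf_sum outer_qf inner_commute[of "y _" p] by (simp add: power2_eq_square)
    then have "\<forall>i\<in>UNIV. (p \<bullet> y i)^2 = 0" by (subst (asm) sum_nonneg_eq_0_iff) auto
    then show ?thesis by simp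
  qed
  have "a \<bullet> (Y *v a) = 0" using pa by (simp add: Yq power2_eq_square)
  moreover have "b \<bullet> (Y *v b) = 0" using pb by (simp add: Yq power2_eq_square)
  moreover have "c \<bullet> (Y *v c) = 0" using pc by (simp add: Yq power2_eq_square)
  ultimately have yz: "\<forall>i. a \<bullet> y i = 0 \<and> b \<bullet> y i = 0 \<and> c \<bullet> y i = 0" using z by blast
  have "X = outer (W e1) + outer (W e2) + outer (W e3) + (\<Sum>i\<in>UNIV. outer (y i))"
    by (simp add: y[symmetric] Y_def)
  moreover have "\<forall>w\<in>{W e1, W e2, W e3}. 0 \<le> a \<bullet> w \<and> 0 \<le> b \<bullet> w \<and> 0 \<le> c \<bullet> w"
    using sgn by (simp add: pW)
  ultimately show ?thesis using yz by blast
qed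

theorem theorem3p7:
  fixes a b c :: "real^'n"
  shows "rank_one_generated
           {X \<in> psd_cone. 0 \<le> a \<bullet> (X *v b) \<and> 0 \<le> b \<bullet> (X *v c) \<and> 0 \<le> a \<bullet> (X *v c)}"
  (is "rank_one_generated ?S")
proof -
  let ?A = "?S \<inter> range outer"
  have psd_add: "X + Y \<in> psd_cone" if "X \<in> psd_cone" "Y \<in> psd_cone" for X Y :: "real^'n^'n"
    using that by (auto simp: psd_cone_def sym_iff qf_add add_nonneg_nonneg)
  have psd_scale: "t *\<^sub>R X \<in> psd_cone" if "X \<in> psd_cone" "0 \<le> t" for X :: "real^'n^'n" and t
    using that by (auto simp: psd_cone_def sym_iff scaleR_matrix_vector_assoc[symmetric])
  have psd0: "(0::real^'n^'n) \<in> psd_cone" by (simp add: psd_cone_def sym_iff)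
  have cc: "convex_cone ?S"
    unfolding convex_cone_iff
  proof (intro conjI ballI allI impI)
    show "0 \<in> ?S" using psd0 by simp
  next
    fix X Y assume "X \<in> ?S" "Y \<in> ?S"
    then show "X + Y \<in> ?S" using psd_add by (simp add: qf_add)
  next
    fix X and t :: real assume "X \<in> ?S" "0 \<le> t"
    then show "t *\<^sub>R X \<in> ?S" using psd_scale
      by (simp add: scaleR_matrix_vector_assoc[symmetric])
  qed
  then have cvx: "convex ?S" by (simp add: convex_cone_def)
  have cont: "continuous_on UNIV (\<lambda>X::real^'n^'n. p \<bullet> (X *v q))" for p q :: "real^'n"
  proof -
    have "linear (\<lambda>X::real^'n^'n. p \<bullet> (X *v q))"
      by (rule linearI) (simp_all add: qf_add scaleR_matrix_vector_assoc[symmetric])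
    then show ?thesis by (intro linear_continuous_on) (simp add: linear_conv_bounded_linear[symmetric])
  qed
  have contT: "continuous_on UNIV (transpose :: real^'n^'n \<Rightarrow> real^'n^'n)"
  proof -
    have "linear (transpose :: real^'n^'n \<Rightarrow> real^'n^'n)"
      by (rule linearI) (simp_all add: vec_eq_iff transpose_def)
    then show ?thesis by (intro linear_continuous_on) (simp add: linear_conv_bounded_linear[symmetric])
  qed
  have eqS: "?S = {X. transpose X = X \<and> (\<forall>x. 0 \<le> x \<bullet> (X *v x)) \<and>
      0 \<le> a \<bullet> (X *v b) \<and> 0 \<le> b \<bullet> (X *v c) \<and> 0 \<le> a \<bullet> (X *v c)}"
    by (auto simp: psd_cone_def)
  have closedS: "closed ?S"
    unfolding eqS
    by (intro closed_Collect_conj closed_Collect_all closed_Collect_eq closed_Collect_le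
        cont contT continuous_on_id continuous_on_const)
  have outerS: "outer u \<in> ?A" if "0 \<le> a \<bullet> u" "0 \<le> b \<bullet> u" "0 \<le> c \<bullet> u" for u
    using that outer_psd by (simp add: outer_qf inner_commute)
  have outerS0: "outer u \<in> ?A" if "a \<bullet> u = 0" "b \<bullet> u = 0" "c \<bullet> u = 0" for u
    using that outer_psd by (simp add: outer_qf inner_commute)
  have twoA: "2 *\<^sub>R x \<in> ?A" if "x \<in> ?A" for x
  proof -
    have "x \<in> range outer" using that by blast
    then obtain u where u1: "x = outer u" by blast
    have u2: "x \<in> ?S" using that by blast
    note u = u1 u2
    have "2 *\<^sub>R x = outer (sqrt 2 *\<^sub>R u)"
      by (simp add: u1 outer_def vec_eq_iff sqrt2_prod)
    moreover have "2 *\<^sub>R x \<in> ?S" using cc u(2) by (simp add: convex_cone_iff)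
    ultimately show ?thesis by simp
  qed
  have H2: "2 *\<^sub>R x \<in> convex hull ?A" if "x \<in> convex hull ?A" for x
  proof -
    have "2 *\<^sub>R x \<in> (\<lambda>x. 2 *\<^sub>R x) ` (convex hull ?A)" using that by blast
    also have "\<dots> = convex hull ((\<lambda>x. 2 *\<^sub>R x) ` ?A)" by (rule convex_hull_scaling[symmetric])
    also have "\<dots> \<subseteq> convex hull ?A" by (rule hull_mono) (use twoA in blast)
    finally show ?thesis .
  qed
  have Hadd: "x + y \<in> convex hull ?A" if "x \<in> convex hull ?A" "y \<in> convex hull ?A" for x y
  proof -
    have "(1/2) *\<^sub>R (2 *\<^sub>R x) + (1/2) *\<^sub>R (2 *\<^sub>R y) \<in> convex hull ?A"
      by (rule convexD[OF convex_convex_hull H2[OF that(1)] H2[OF that(2)]]) auto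
    then show ?thesis by simp
  qed
  have Hsum: "(\<Sum>i\<in>I. f i) \<in> convex hull ?A" if "finite I" "\<forall>i\<in>I. f i \<in> convex hull ?A" for I f
    using that
  proof (induct I rule: finite_induct)
    case empty
    have "outer 0 \<in> ?A" by (rule outerS0) auto
    then show ?case by (auto intro: hull_inc)
  next
    case (insert i I)
    then show ?case by (simp add: Hadd)
  qed
  have sub: "?S \<subseteq> convex hull ?A"
  proof
    fix X assume X: "X \<in> ?S"
    then obtain w1 w2 w3 and y :: "'n \<Rightarrow> real^'n" where
      d: "X = outer w1 + outer w2 + outer w3 + (\<Sum>i\<in>UNIV. outer (y i))"
      and s: "\<forall>w\<in>{w1,w2,w3}. 0 \<le> a \<bullet> w \<and> 0 \<le> b \<bullet> w \<and> 0 \<le> c \<bullet> w"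
      and z: "\<forall>i. a \<bullet> y i = 0 \<and> b \<bullet> y i = 0 \<and> c \<bullet> y i = 0"
      using decomp[of X a b c] by auto
    have h: "outer w \<in> convex hull ?A" if "w \<in> {w1,w2,w3}" for w
    proof -
      have "0 \<le> a \<bullet> w" "0 \<le> b \<bullet> w" "0 \<le> c \<bullet> w" using s that by auto
      then show ?thesis by (rule hull_inc[OF outerS])
    qed
    have "(\<Sum>i\<in>UNIV. outer (y i)) \<in> convex hull ?A"
    proof (rule Hsum)
      show "\<forall>i\<in>UNIV. outer (y i) \<in> convex hull ?A"
        using z by (blast intro: hull_inc[OF outerS0])
    qed simp
    then show "X \<in> convex hull ?A" unfolding d by (intro Hadd h) auto
  qed
  have sup: "convex hull ?A \<subseteq> ?S"
    by (rule hull_minimal) (use cvx in auto)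
  show ?thesis unfolding rank_one_generated_def
    using cc closedS sub sup by (auto simp: psd_cone_def)
qed

end
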